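(* Let $d\in\mathbb{N}$, $k\in\{1,\dots,d\}$ and $\mathbf{e}_1\in\mathbb{R}^d$. Assume there exists $\delta>0$ such that (a) $\big||e_{1i}|-|e_{1j}|\big|\ge\sqrt2\,\delta$ for all $i\neq j$ in $\mathrm{TopFeatures}(\mathbf{e}_1;\min(k+1,d))$, and (b) if $k=d$, additionally $|e_{1i}|\ge\delta$ for all $i\in[d]$. Then for every $\mathbf{e}_2\in\mathbb{R}^d$, $$1-\mathrm{SignedRankAgree}(\mathbf{e}_1,\mathbf{e}_2;k)\le\delta^{-1}\,\|\mathbf{e}_1-\mathbf{e}_2\|_2 .$$
   Context: $\|\cdot\|_2$ is the Euclidean norm. $\mathrm{sign}(x):=1$ if $x\ge0$ and $-1$ otherwise. For $\mathbf{x}\in\mathbb{R}^d$, $\mathrm{rank}(\mathbf{x},i)$ denotes the position of index $i$ when indices are ordered by descending $|x_i|$, i.e. $|\{j\in[d]:|x_j|\ge|x_i|\}|$, with ties broken so that ranks form a permutation of $[d]$ (paper's convention: if $|x_i|=|x_j|$ with $i>j$ then $\mathrm{rank}(\mathbf{x},j)=\mathrm{rank}(\mathbf{x},i)+1$). $\mathrm{TopFeatures}(\mathbf{x};m):=\{i\in[d]:\mathrm{rank}(\mathbf{x},i)\le m\}$. The top-$k$ signed rank agreement is $\mathrm{SignedRankAgree}(\mathbf{e}_1,\mathbf{e}_2;k):=\frac1k\big|\{i\in[d]: i\in\mathrm{TopFeatures}(\mathbf{e}_1;k)\wedge i\in\mathrm{TopFeatures}(\mathbf{e}_2;k)\wedge\mathrm{sign}(e_{1i})=\mathrm{sign}(e_{2i})\wedge\mathrm{rank}(\mathbf{e}_1,i)=\mathrm{rank}(\mathbf{e}_2,i)\}\big|$.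 *)

theory Defs
  imports Complex_Main
begin

(* Vectors in R^d are modelled as functions nat => real; only the
   coordinates 1..d are relevant. *)

definition sign :: "real \<Rightarrow> real" where
  "sign x = (if x \<ge> 0 then 1 else -1)"

(* rank(x,i): position of i when indices 1..d are ordered by descending |x_i|;
   ties: if |x_i| = |x_j| and i > j then rank(x,j) = rank(x,i) + 1,
   i.e. among tied indices the larger index comes first. *)
definition rank :: "nat \<Rightarrow> (nat \<Rightarrow> real) \<Rightarrow> nat \<Rightarrow> nat" where
  "rank d x i = card {j \<in> {1..d}. \<bar>x j\<bar> > \<bar>x i\<bar>}
              + card {j \<in> {1..d}. \<bar>x j\<bar> = \<bar>x i\<bar> \<and> j \<ge> i}"

definition TopFeatures :: "nat \<Rightarrow> (nat \<Rightarrow> real) \<Rightarrow> nat \<Rightarrow> nat set" where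
  "TopFeatures d x m = {i \<in> {1..d}. rank d x i \<le> m}"

definition SignedRankAgree :: "nat \<Rightarrow> (nat \<Rightarrow> real) \<Rightarrow> (nat \<Rightarrow> real) \<Rightarrow> nat \<Rightarrow> real" where
  "SignedRankAgree d e1 e2 k =
     real (card {i \<in> {1..d}. i \<in> TopFeatures d e1 k \<and> i \<in> TopFeatures d e2 k
                 \<and> sign (e1 i) = sign (e2 i) \<and> rank d e1 i = rank d e2 i}) / real k"

definition l2dist :: "nat \<Rightarrow> (nat \<Rightarrow> real) \<Rightarrow> (nat \<Rightarrow> real) \<Rightarrow> real" where
  "l2dist d x y = sqrt (\<Sum>i = 1..d. (x i - y i)\<^sup>2)"

end

theory Submission
  imports Defs
begin

definition rle :: "(nat \<Rightarrow> real) \<Rightarrow> nat \<Rightarrow> nat \<Rightarrow> bool" where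
  "rle x j i = (\<bar>x j\<bar> > \<bar>x i\<bar> \<or> (\<bar>x j\<bar> = \<bar>x i\<bar> \<and> j \<ge> i))"

lemma rank_alt: "rank d x i = card {j \<in> {1..d}. rle x j i}"
proof -
  have "{j \<in> {1..d}. rle x j i} = {j \<in> {1..d}. \<bar>x j\<bar> > \<bar>x i\<bar>} \<union> {j \<in> {1..d}. \<bar>x j\<bar> = \<bar>x i\<bar> \<and> j \<ge> i}"
    unfolding rle_def by auto
  moreover have "card ({j \<in> {1..d}. \<bar>x j\<bar> > \<bar>x i\<bar>} \<union> {j \<in> {1..d}. \<bar>x j\<bar> = \<bar>x i\<bar> \<and> j \<ge> i})
     = card {j \<in> {1..d}. \<bar>x j\<bar> > \<bar>x i\<bar>} + card {j \<in> {1..d}. \<bar>x j\<bar> = \<bar>x i\<bar> \<and> j \<ge> i}"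
    by (rule card_Un_disjoint) auto
  ultimately show ?thesis unfolding rank_def by simp
qed

lemma rle_trans: "rle x a b \<Longrightarrow> rle x b c \<Longrightarrow> rle x a c"
  unfolding rle_def by auto

lemma rle_total: "rle x a b \<or> rle x b a"
  unfolding rle_def by auto

lemma rle_antisym: "rle x a b \<Longrightarrow> rle x b a \<Longrightarrow> a = b"
  unfolding rle_def by auto

lemma rank_mono: "rle x i j \<Longrightarrow> rank d x i \<le> rank d x j"
  unfolding rank_alt by (rule card_mono) (auto intro: rle_trans)

lemma rank_strict:
  assumes "rle x i j" "i \<noteq> j" "j \<in> {1..d}"
  shows "rank d x i < rank d x j"
  unfolding rank_alt
proof (rule psubset_card_mono)
  show "{j \<in> {1..d}. rle x j i} \<subset> {ja \<in> {1..d}. rle x ja j}"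
  proof
    show "{j \<in> {1..d}. rle x j i} \<subseteq> {ja \<in> {1..d}. rle x ja j}"
      using assms by (auto intro: rle_trans)
    have "j \<in> {ja \<in> {1..d}. rle x ja j}" using assms by (simp add: rle_def)
    moreover have "j \<notin> {j \<in> {1..d}. rle x j i}" using assms rle_antisym by blast
    ultimately show "{j \<in> {1..d}. rle x j i} \<noteq> {ja \<in> {1..d}. rle x ja j}" by blast
  qed
qed simp

lemma rank_lt_rle: "rank d x a < rank d x b \<Longrightarrow> rle x a b"
  using rle_total[of x a b] rank_mono[of x b a d] by auto

lemma rank_inj: "inj_on (rank d x) {1..d}"
proof
  fix i j assume "i \<in> {1..d}" "j \<in> {1..d}" "rank d x i = rank d x j"
  then show "i = j" using rle_total[of x i j] rank_strict[of x i j d] rank_strict[of x j i d]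
    by fastforce
qed

lemma rank_range: "i \<in> {1..d} \<Longrightarrow> rank d x i \<in> {1..d}"
proof -
  assume i: "i \<in> {1..d}"
  have "i \<in> {j \<in> {1..d}. rle x j i}" using i by (simp add: rle_def)
  then have "card {j \<in> {1..d}. rle x j i} \<ge> 1"
    by (simp add: Suc_le_eq card_gt_0_iff; blast)
  moreover have "card {j \<in> {1..d}. rle x j i} \<le> card {1..d}" by (rule card_mono) auto
  ultimately show ?thesis unfolding rank_alt by simp
qed

lemma rank_image: "rank d x ` {1..d} = {1..d}"
proof -
  have "rank d x ` {1..d} \<subseteq> {1..d}" using rank_range by blast
  moreover have "card (rank d x ` {1..d}) = card {1..d}" using rank_inj card_image by blast
  ultimately show ?thesis by (simp add: card_subset_eq)
qed

lemma card_Top: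
  assumes "m \<le> d" shows "card (TopFeatures d x m) = m"
proof -
  have "rank d x ` TopFeatures d x m = {1..m}"
  proof
    show "rank d x ` TopFeatures d x m \<subseteq> {1..m}"
      unfolding TopFeatures_def using rank_range by fastforce
    show "{1..m} \<subseteq> rank d x ` TopFeatures d x m"
    proof
      fix y assume y: "y \<in> {1..m}"
      then have "y \<in> rank d x ` {1..d}" using assms rank_image by auto
      then obtain i where "i \<in> {1..d}" "y = rank d x i" by auto
      then show "y \<in> rank d x ` TopFeatures d x m" using y unfolding TopFeatures_def by auto
    qed
  qed
  moreover have "inj_on (rank d x) (TopFeatures d x m)"
    using rank_inj by (rule inj_on_subset) (auto simp: TopFeatures_def)
  ultimately show ?thesis using card_image by fastforce
qed

lemma gen_ineq: "\<bar>(\<bar>c::real\<bar> - \<bar>d\<bar>) - (\<bar>a\<bar> - \<bar>b\<bar>)\<bar> \<le> \<bar>a - c\<bar> + \<bar>b - d\<bar>"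
  by (simp add: abs_if split: if_splits)

lemma gen_cmp:
  fixes A B r s :: real
  assumes "\<bar>(\<bar>c\<bar> - \<bar>d\<bar>) - (\<bar>a\<bar> - \<bar>b\<bar>)\<bar> \<le> r" "\<bar>\<bar>a\<bar> - \<bar>b\<bar>\<bar> \<ge> s" "r < s"
  shows "(\<bar>d\<bar> > \<bar>c\<bar> \<longleftrightarrow> \<bar>b\<bar> > \<bar>a\<bar>) \<and> (\<bar>d\<bar> = \<bar>c\<bar> \<longleftrightarrow> \<bar>b\<bar> = \<bar>a\<bar>)"
proof -
  define A where "A = \<bar>c\<bar> - \<bar>d\<bar>"
  define B where "B = \<bar>a\<bar> - \<bar>b\<bar>"
  have "\<bar>A - B\<bar> \<le> r" "\<bar>B\<bar> \<ge> s" using assms unfolding A_def B_def by auto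
  then have "(A < 0 \<longleftrightarrow> B < 0) \<and> A \<noteq> 0 \<and> B \<noteq> 0" using assms(3) by linarith
  then show ?thesis unfolding A_def B_def by linarith
qed

theorem lemma5:
  fixes d k :: nat and e1 e2 :: "nat \<Rightarrow> real" and \<delta> :: real
  assumes "1 \<le> k" and "k \<le> d"
    and "\<delta> > 0"
    and "\<forall>i \<in> TopFeatures d e1 (min (k + 1) d). \<forall>j \<in> TopFeatures d e1 (min (k + 1) d).
           i \<noteq> j \<longrightarrow> \<bar>\<bar>e1 i\<bar> - \<bar>e1 j\<bar>\<bar> \<ge> sqrt 2 * \<delta>"
    and "k = d \<longrightarrow> (\<forall>i \<in> {1..d}. \<bar>e1 i\<bar> \<ge> \<delta>)"
  shows "1 - SignedRankAgree d e1 e2 k \<le> inverse \<delta> * l2dist d e1 e2"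
proof (cases "l2dist d e1 e2 < \<delta>")
  case False
  have "SignedRankAgree d e1 e2 k \<ge> 0" unfolding SignedRankAgree_def by simp
  moreover have "inverse \<delta> * l2dist d e1 e2 \<ge> 1"
    using False assms(3) by (simp add: field_simps)
  ultimately show ?thesis by linarith
next
  case True
  define S where "S = (\<Sum>i = 1..d. (e1 i - e2 i)\<^sup>2)"
  have S0: "S \<ge> 0" unfolding S_def by (simp add: sum_nonneg)
  have "sqrt S < \<delta>" using True unfolding l2dist_def S_def by simp
  then have Sd: "S < \<delta>\<^sup>2" using S0 assms(3)
  proof -
    have "S = (sqrt S)\<^sup>2" using S0 by simp
    also have "\<dots> < \<delta>\<^sup>2" using \<open>sqrt S < \<delta>\<close> S0 by (intro power_strict_mono) auto
    finally show ?thesis .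
  qed
  have one: "\<bar>e1 i - e2 i\<bar> < \<delta>" if "i \<in> {1..d}" for i
  proof -
    have "(e1 i - e2 i)\<^sup>2 \<le> S" unfolding S_def
      by (rule member_le_sum) (use that in auto)
    then have "(e1 i - e2 i)\<^sup>2 < \<delta>\<^sup>2" using Sd by linarith
    then have "\<bar>e1 i - e2 i\<bar>\<^sup>2 < \<delta>\<^sup>2" by simp
    then show ?thesis using assms(3) power2_less_imp_less[of "\<bar>e1 i - e2 i\<bar>" \<delta>] by simp
  qed
  have two: "\<bar>e1 i - e2 i\<bar> + \<bar>e1 j - e2 j\<bar> < sqrt 2 * \<delta>"
    if "i \<in> {1..d}" "j \<in> {1..d}" "i \<noteq> j" for i j
  proof -
    have "(\<Sum>l\<in>{i,j}. (e1 l - e2 l)\<^sup>2) \<le> S" unfolding S_def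
      by (rule sum_mono2) (use that in auto)
    then have h: "(e1 i - e2 i)\<^sup>2 + (e1 j - e2 j)\<^sup>2 < \<delta>\<^sup>2" using Sd that by simp
    define a where "a = \<bar>e1 i - e2 i\<bar>"
    define b where "b = \<bar>e1 j - e2 j\<bar>"
    have "a\<^sup>2 + b\<^sup>2 < \<delta>\<^sup>2" using h unfolding a_def b_def by simp
    moreover have "(a + b)\<^sup>2 \<le> 2 * (a\<^sup>2 + b\<^sup>2)"
    proof -
      have "(a + b)\<^sup>2 = 2 * (a\<^sup>2 + b\<^sup>2) - (a - b)\<^sup>2" by (simp add: power2_eq_square algebra_simps)
      moreover have "(a - b)\<^sup>2 \<ge> 0" by simp
      ultimately show ?thesis by linarith
    qed
    ultimately have "(a + b)\<^sup>2 < (sqrt 2 * \<delta>)\<^sup>2" by (simp add: power_mult_distrib)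
    moreover have "sqrt 2 * \<delta> \<ge> 0" using assms(3) by simp
    ultimately have "a + b < sqrt 2 * \<delta>" using power2_less_imp_less by blast
    then show ?thesis unfolding a_def b_def .
  qed
  let ?T = "TopFeatures d e1 (min (k + 1) d)"
  have topk_sub: "TopFeatures d e1 k \<subseteq> ?T" using assms(2) unfolding TopFeatures_def by auto
  have gap: "\<bar>\<bar>e1 i\<bar> - \<bar>e1 j\<bar>\<bar> \<ge> sqrt 2 * \<delta> \<and> \<bar>e1 i\<bar> \<ge> \<delta>"
    if i: "i \<in> TopFeatures d e1 k" and j: "j \<in> {1..d}" "j \<noteq> i" for i j
  proof (cases "k = d")
    case True
    have mind: "min (k + 1) d = d" using True by simp
    have "rank d e1 j \<le> d" using rank_range[OF j(1)] by simp
    then have jT: "j \<in> ?T" using j(1) unfolding mind TopFeatures_def by simp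
    have iT: "i \<in> ?T" using i topk_sub by blast
    have g: "\<bar>\<bar>e1 i\<bar> - \<bar>e1 j\<bar>\<bar> \<ge> sqrt 2 * \<delta>" using bspec[OF bspec[OF assms(4) iT] jT] j(2) by simp
    have id: "i \<in> {1..d}" using i unfolding TopFeatures_def by simp
    have "\<bar>e1 i\<bar> \<ge> \<delta>" using assms(5) True id by blast
    then show ?thesis using g by simp
  next
    case False
    then have kd: "k + 1 \<le> d" using assms(2) by simp
    then have "k + 1 \<in> rank d e1 ` {1..d}" using rank_image[of d e1] by simp
    then obtain m where m: "m \<in> {1..d}" "rank d e1 m = k + 1" by (metis imageE)
    have mT: "m \<in> ?T" using m kd unfolding TopFeatures_def by simp
    have iT: "i \<in> ?T" using i topk_sub by blast
    have ri: "rank d e1 i \<le> k" "i \<in> {1..d}" using i unfolding TopFeatures_def by auto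
    have im: "i \<noteq> m" using ri m by auto
    have "rle e1 i m" using ri m by (intro rank_lt_rle[where d=d]) simp
    then have e_im: "\<bar>e1 i\<bar> \<ge> \<bar>e1 m\<bar>" unfolding rle_def by auto
    have "\<bar>\<bar>e1 i\<bar> - \<bar>e1 m\<bar>\<bar> \<ge> sqrt 2 * \<delta>" using bspec[OF bspec[OF assms(4) iT] mT] im by simp
    then have gim: "\<bar>e1 i\<bar> - \<bar>e1 m\<bar> \<ge> sqrt 2 * \<delta>" using e_im by linarith
    have s2: "sqrt 2 * \<delta> \<ge> \<delta>" using assms(3) by (simp add: real_le_rsqrt)
    show ?thesis
    proof (cases "j \<in> ?T")
      case True
      then have "\<bar>\<bar>e1 i\<bar> - \<bar>e1 j\<bar>\<bar> \<ge> sqrt 2 * \<delta>" using bspec[OF bspec[OF assms(4) iT] True] j(2) by simp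
      then show ?thesis using gim s2 by linarith
    next
      case False
      then have "rank d e1 j > k + 1" using j kd unfolding TopFeatures_def by auto
      then have "rle e1 m j" using m by (intro rank_lt_rle[where d=d]) simp
      then have "\<bar>e1 m\<bar> \<ge> \<bar>e1 j\<bar>" unfolding rle_def by auto
      then show ?thesis using gim s2 by auto
    qed
  qed
  have cmp: "(\<bar>e2 j\<bar> > \<bar>e2 i\<bar> \<longleftrightarrow> \<bar>e1 j\<bar> > \<bar>e1 i\<bar>) \<and> (\<bar>e2 j\<bar> = \<bar>e2 i\<bar> \<longleftrightarrow> \<bar>e1 j\<bar> = \<bar>e1 i\<bar>)"
    if i: "i \<in> TopFeatures d e1 k" and j: "j \<in> {1..d}" for i j
  proof (cases "j = i")
    case False
    have id: "i \<in> {1..d}" using i unfolding TopFeatures_def by auto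
    have g: "\<bar>\<bar>e1 i\<bar> - \<bar>e1 j\<bar>\<bar> \<ge> sqrt 2 * \<delta>" using gap[OF i j False] by simp
    have t: "\<bar>e1 i - e2 i\<bar> + \<bar>e1 j - e2 j\<bar> < sqrt 2 * \<delta>" using two[OF id j] False by auto
    have "\<bar>(\<bar>e2 i\<bar> - \<bar>e2 j\<bar>) - (\<bar>e1 i\<bar> - \<bar>e1 j\<bar>)\<bar> \<le> \<bar>e1 i - e2 i\<bar> + \<bar>e1 j - e2 j\<bar>"
      by (rule gen_ineq)
    then show ?thesis using gen_cmp[OF _ g t] by blast
  qed simp
  have sgn: "sign (e1 i) = sign (e2 i)" if i: "i \<in> TopFeatures d e1 k" for i
  proof -
    have id: "i \<in> {1..d}" using i unfolding TopFeatures_def by auto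
    have "\<bar>e1 i\<bar> \<ge> \<delta>"
    proof (cases "d = 1")
      case True
      then have "k = d" using assms(1,2) by simp
      then show ?thesis using assms(5) id by auto
    next
      case False
      have d2: "d \<ge> 2" using False assms(1,2) by simp
      obtain j where "j \<in> {1..d}" "j \<noteq> i"
      proof (cases "i = 1")
        case True then show ?thesis using that[of 2] d2 by auto
      next
        case False then show ?thesis using that[of 1] d2 by auto
      qed
      then show ?thesis using gap[OF i] by blast
    qed
    then show ?thesis using one[OF id] unfolding sign_def by auto
  qed
  have rk: "rank d e2 i = rank d e1 i" if i: "i \<in> TopFeatures d e1 k" for i
  proof -
    have "{j \<in> {1..d}. \<bar>e2 j\<bar> > \<bar>e2 i\<bar>} = {j \<in> {1..d}. \<bar>e1 j\<bar> > \<bar>e1 i\<bar>}"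
      using cmp[OF i] by auto
    moreover have "{j \<in> {1..d}. \<bar>e2 j\<bar> = \<bar>e2 i\<bar> \<and> j \<ge> i} = {j \<in> {1..d}. \<bar>e1 j\<bar> = \<bar>e1 i\<bar> \<and> j \<ge> i}"
      using cmp[OF i] by auto
    ultimately show ?thesis unfolding rank_def by simp
  qed
  have "{i \<in> {1..d}. i \<in> TopFeatures d e1 k \<and> i \<in> TopFeatures d e2 k
                 \<and> sign (e1 i) = sign (e2 i) \<and> rank d e1 i = rank d e2 i} = TopFeatures d e1 k"
  proof
    show "TopFeatures d e1 k \<subseteq> {i \<in> {1..d}. i \<in> TopFeatures d e1 k \<and> i \<in> TopFeatures d e2 k
                 \<and> sign (e1 i) = sign (e2 i) \<and> rank d e1 i = rank d e2 i}"
    proof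
      fix i assume i: "i \<in> TopFeatures d e1 k"
      then have "i \<in> TopFeatures d e2 k" using rk[OF i] unfolding TopFeatures_def by auto
      then show "i \<in> {i \<in> {1..d}. i \<in> TopFeatures d e1 k \<and> i \<in> TopFeatures d e2 k
                 \<and> sign (e1 i) = sign (e2 i) \<and> rank d e1 i = rank d e2 i}"
        using i sgn[OF i] rk[OF i] unfolding TopFeatures_def by auto
    qed
  qed auto
  then have "SignedRankAgree d e1 e2 k = 1"
    unfolding SignedRankAgree_def using card_Top[OF assms(2)] assms(1) by simp
  moreover have "inverse \<delta> * l2dist d e1 e2 \<ge> 0" using assms(3) unfolding l2dist_def by (simp add: sum_nonneg)
  ultimately show ?thesis by simp
qed

end
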